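(* Let $n\ge 4$ be an integer. If $k$ is a positive integer satisfying $$\binom{(k-1)-\lfloor \frac{(n-1)^3}{2}\rfloor-1}{\lfloor\frac{(n-1)^3-1}{2}\rfloor}+\binom{(k-1)-\lfloor \frac{(n-1)^3-1}{2}\rfloor-1}{\lfloor\frac{(n-1)^3}{2}\rfloor}<n^3\le \binom{k-\lfloor \frac{(n-1)^3}{2}\rfloor-1}{\lfloor\frac{(n-1)^3-1}{2}\rfloor}+\binom{k-\lfloor \frac{(n-1)^3-1}{2}\rfloor-1}{\lfloor\frac{(n-1)^3}{2}\rfloor},$$ then $k=(n-1)^3+2$.
   Context: For integers $a$ and $b\ge 0$, $\binom{a}{b}$ denotes the usual binomial coefficient, taken to be $0$ when $a<b$. *)

theory Defs
  imports Main
begin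

definition ibinom :: "int \<Rightarrow> nat \<Rightarrow> nat" where
  "ibinom a b = (if a < int b then 0 else (nat a) choose b)"

end

theory Submission
  imports Defs
begin

lemma ibinom_mono: "x \<le> y \<Longrightarrow> ibinom x c \<le> ibinom y c"
  unfolding ibinom_def by (auto intro: binomial_right_mono)

lemma ibinom_suc: "ibinom (int b + 1) b = b + 1"
proof -
  have h: "nat (int b + 1) = Suc b" by simp
  show ?thesis by (simp only: ibinom_def h) simp
qed

lemma ibinom_suc2: "ibinom (int b + 2) b = (b + 2) * (b + 1) div 2"
proof -
  have "(b + 2) choose b = (b+2) choose 2"
    using binomial_symmetric[of b "b+2"] by simp
  also have "\<dots> = (b + 2) * (b + 1) div 2" by (simp add: choose_two)
  moreover have h: "nat (int b + 2) = b + 2" by simp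
  ultimately show ?thesis by (simp only: ibinom_def h) simp
qed

lemma cube_ineq:
  fixes j :: nat assumes "j \<ge> 3" shows "4 * (j+1)^3 \<le> j^6"
proof -
  have "3*j \<le> j*j" using assms by (intro mult_right_mono) auto
  moreover have "2*(j+1) \<le> 3*j" using assms by simp
  ultimately have "2*(j+1) \<le> j*j" by (metis le_trans)
  then have "2*(j+1) \<le> j^2" by (simp add: power2_eq_square)
  then have "(2*(j+1))^3 \<le> (j^2)^3" by (rule power_mono) simp
  moreover have "(2*(j+1))^3 = 8*(j+1)^3" by (simp only: power_mult_distrib) simp
  moreover have "(j^2)^3 = j^6" by (simp add: power_mult[symmetric])
  ultimately show ?thesis by linarith
qed

lemma half_sum: "X \<le> Y \<Longrightarrow> even (X::nat) \<Longrightarrow> X \<le> X div 2 + Y div 2"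
proof -
  assume h: "X \<le> Y" "even X"
  have "X div 2 \<le> Y div 2" using h(1) by (rule div_le_mono)
  moreover have "X = X div 2 + X div 2" using h(2) by auto
  ultimately show ?thesis by linarith
qed

theorem proposition6:
  fixes n k :: nat
  assumes "n \<ge> 4" and "k > 0"
    and "ibinom ((int k - 1) - (int ((n-1)^3) div 2) - 1) (nat ((int ((n-1)^3) - 1) div 2))
         + ibinom ((int k - 1) - ((int ((n-1)^3) - 1) div 2) - 1) (nat (int ((n-1)^3) div 2))
         < n^3"
    and "n^3 \<le> ibinom (int k - (int ((n-1)^3) div 2) - 1) (nat ((int ((n-1)^3) - 1) div 2))
         + ibinom (int k - ((int ((n-1)^3) - 1) div 2) - 1) (nat (int ((n-1)^3) div 2))"
  shows "k = (n-1)^3 + 2"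
proof -
  define m where "m = (n-1)^3"
  define a where "a = m div 2"
  define b where "b = (m - 1) div 2"
  have m27: "m \<ge> 27" unfolding m_def using assms(1)
    using power_mono[of 3 "n-1" 3] by simp
  have e1: "int ((n-1)^3) div 2 = int a" unfolding a_def m_def by (simp add: zdiv_int)
  have e2: "(int ((n-1)^3) - 1) div 2 = int b" unfolding b_def m_def
    using m27 m_def by (simp add: zdiv_int of_nat_diff)
  have ab: "a + b + 1 = m" unfolding a_def b_def using m27 by linarith
  have ba: "b \<le> a" unfolding a_def b_def by linarith
  define f where "f k = ibinom (k - int a - 1) b + ibinom (k - int b - 1) a" for k :: int
  have fmono: "x \<le> y \<Longrightarrow> f x \<le> f y" for x y
    unfolding f_def by (intro add_mono ibinom_mono) auto
  have h3: "f (int k - 1) < n^3" using assms(3) unfolding f_def e1 e2 by (simp add: algebra_simps)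
  have h4: "n^3 \<le> f (int k)" using assms(4) unfolding f_def e1 e2 by simp
  have fm1: "f (int m + 1) = m + 1"
  proof -
    have "int m + 1 - int a - 1 = int b + 1" "int m + 1 - int b - 1 = int a + 1" using ab by linarith+
    then have "f (int m + 1) = ibinom (int b + 1) b + ibinom (int a + 1) a" unfolding f_def by (simp only:)
    then show ?thesis using ab by (simp add: ibinom_suc)
  qed
  have nm: "m + 1 < n^3"
  proof -
    have "(n-1)^3 < n^3" using assms(1) by (intro power_strict_mono) auto
    moreover have "(n-1)^3 + 1 \<noteq> n^3"
    proof
      assume "(n-1)^3 + 1 = n^3"
      moreover have "n^3 = (n-1)^3 + 3*(n-1)^2 + 3*(n-1) + 1"
        using assms(1) by (cases n) (auto simp: power3_eq_cube power2_eq_square algebra_simps)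
      ultimately show False using assms(1) by simp
    qed
    ultimately show ?thesis unfolding m_def by linarith
  qed
  have fm2: "n^3 \<le> f (int m + 2)"
  proof -
    have "int m + 2 - int a - 1 = int b + 1 + 1" "int m + 2 - int b - 1 = int a + 1 + 1" using ab by linarith+
    hence "f (int m + 2) = (b + 2) * (b + 1) div 2 + (a + 2) * (a + 1) div 2"
      unfolding f_def using ibinom_suc2[of a] ibinom_suc2[of b] by (simp only: add.assoc one_add_one)
    moreover have "(b + 2) * (b + 1) div 2 + (a + 2) * (a + 1) div 2 \<ge> (b+2)*(b+1)"
    proof -
      have "(a + 2) * (a + 1) \<ge> (b+2)*(b+1)" using ba by (intro mult_mono) auto
      moreover have "even ((b + 2) * (b + 1))" by simp
      moreover have "even ((a + 2) * (a + 1))" by simp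
      ultimately show ?thesis
        by (meson half_sum)
    qed
    moreover have "4*n^3 \<le> 4*((b+2)*(b+1))"
    proof -
      have ab1: "a \<le> b + 1" unfolding a_def b_def by linarith
      have "m \<le> 2*(b+1)" "m \<le> 2*(b+2)" using ab ab1 by simp_all
      hence "m*m \<le> (2*(b+2))*(2*(b+1))" by (intro mult_mono) auto
      moreover have "4 * n^3 \<le> m*m"
      proof -
        obtain j where j: "n = j + 1" "j \<ge> 3" using assms(1) by (intro that[of "n-1"]) auto
        have "m * m = j^6" unfolding m_def j(1) by (simp add: power_add[symmetric])
        then show ?thesis using cube_ineq[OF j(2)] j(1) by simp
      qed
      ultimately show ?thesis by simp
    qed
    ultimately show ?thesis by linarith
  qed
  show ?thesis
  proof (rule ccontr)
    assume ne: "k \<noteq> (n-1)^3 + 2"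
    show False
    proof (cases "k \<le> m + 1")
      case True
      then have "f (int k) \<le> f (int m + 1)" by (intro fmono) simp
      then show False using h4 fm1 nm by linarith
    next
      case False
      then have "k \<ge> m + 3" using ne m_def by simp
      then have "f (int m + 2) \<le> f (int k - 1)" by (intro fmono) simp
      then show False using h3 fm2 by linarith
    qed
  qed
qed

end
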